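(* Let $f:\mathbb{R}^{n_x}\to\mathbb{R}^{n_x}$ be differentiable with Jacobian $F_x$, $L:\mathbb{R}^{n_x}\to\mathbb{R}^{n_x\times n_\beta}$, $Q$ an $n_\beta\times n_\beta$ diffusion matrix, $\overline{x}_a\in\mathbb{R}^{n_x}$, $P_a$ a covariance matrix, $\mu>0$, $\Delta t_k>0$. Let $m(t),P(t)$ solve $\frac{dm}{dt}=f(m)$, $\frac{dP}{dt}=PF_x^T(m)+F_x(m)P+L(m)QL^T(m)$ with $m(0)=\overline{x}_a$, $P(0)=P_a$, and take the conditional mean and covariance of a target born with time lag $t$ to be $\mathrm{E}[x_k|t]=m(t)$, $\mathrm{C}[x_k|t]=P(t)$. Let the lag $T$ have density $\frac{\mu}{1-e^{-\mu\Delta t_k}}e^{-\mu t}\chi_{[0,\Delta t_k)}(t)$ and define the mean and covariance at the time of birth by $\overline{x}_{b,k}=\mathrm{E}[\mathrm{E}[x_k|T]]$ and $P_{b,k}=\mathrm{C}[\mathrm{E}[x_k|T]]+\mathrm{E}[\mathrm{C}[x_k|T]]$. Then $$\overline{x}_{b,k}=\frac{\mu}{1-e^{-\mu\Delta t_k}}\overline{x}(\Delta t_k),\qquad P_{b,k}=\frac{\mu}{1-e^{-\mu\Delta t_k}}\Sigma(\Delta t_k)-\overline{x}_{b,k}\overline{x}_{b,k}^T,$$ where $\overline{x}(\cdot),\Sigma(\cdot)$ are obtained by solving jointly, from $t=0$ to $\Delta t_k$, the ODE system $\frac{dm}{dt}=f(m)$, $\frac{dP}{dt}=PF_x^T(m)+F_x(m)P+L(m)QL^T(m)$,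 $\frac{d\overline{x}}{dt}=m\,e^{-\mu t}$, $\frac{d\Sigma}{dt}=[P+mm^T]e^{-\mu t}$, with initial conditions $m(0)=\overline{x}_a$, $P(0)=P_a$, $\overline{x}(0)=0$, $\Sigma(0)=0$.
   Context: Setting: targets appear according to a Poisson process in time, with state distributed $\mathcal{N}(\overline{x}_a,P_a)$ at appearance, have exponential life spans with rate $\mu$, and move according to the nonlinear time-invariant SDE $dx=f(x)dt+L(x)d\beta$, with $\beta$ Brownian motion with diffusion matrix $Q$. The moment ODEs for $m,P$ result from the approximations $f(x)\approx f(m)+F_x(m)(x-m)$ and $L(x)\approx L(m)$. A target born at time step $k$ ($\Delta t_k=t_k-t_{k-1}$) appeared with lag $T\in[0,\Delta t_k)$ having the truncated exponential density above; $\chi_{[0,\Delta t_k)}$ is the indicator function. *)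

theory Defs
  imports "HOL-Probability.Probability"
begin

definition outer :: "real^'n \<Rightarrow> real^'n \<Rightarrow> real^'n^'n" where
  "outer v w = (\<chi> i j. v $ i * w $ j)"

definition lag_density :: "real \<Rightarrow> real \<Rightarrow> real \<Rightarrow> real" where
  "lag_density mu dt t = mu / (1 - exp (- mu * dt)) * exp (- mu * t) * indicator {0..<dt} t"

definition lag_distr :: "real \<Rightarrow> real \<Rightarrow> real measure" where
  "lag_distr mu dt = density lborel (\<lambda>t. ennreal (lag_density mu dt t))"

text \<open>E[g(T)]; T lies in [0,dt) almost surely, so integrating over that set is the full expectation.\<close>
definition lag_expect :: "real \<Rightarrow> real \<Rightarrow> (real \<Rightarrow> 'a::{banach,second_countable_topology}) \<Rightarrow> 'a" where
  "lag_expect mu dt g = (LINT t:{0..<dt}|lag_distr mu dt. g t)"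

definition lag_cov :: "real \<Rightarrow> real \<Rightarrow> (real \<Rightarrow> real^'n) \<Rightarrow> real^'n^'n" where
  "lag_cov mu dt g = lag_expect mu dt (\<lambda>t. outer (g t - lag_expect mu dt g) (g t - lag_expect mu dt g))"

end

theory Submission
  imports Defs
begin

lemma lagE:
  fixes g :: "real \<Rightarrow> 'a::euclidean_space"
  assumes mu: "mu > 0" and dt: "dt > 0" and cont: "continuous_on {0..dt} g"
    and I: "((\<lambda>t. exp (- mu * t) *\<^sub>R g t) has_integral I) {0..dt}"
  shows "lag_expect mu dt g = (mu / (1 - exp (- mu * dt))) *\<^sub>R I"
proof -
  define c where "c = mu / (1 - exp (- mu * dt))"
  define S where "S = {0..<dt::real}"
  have contS: "continuous_on S g" using cont unfolding S_def
    by (rule continuous_on_subset) auto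
  have meas: "(\<lambda>t. indicator S t *\<^sub>R g t) \<in> borel_measurable lborel"
    using borel_measurable_continuous_on_indicator[OF _ contS] unfolding S_def by simp
  have dmeas: "lag_density mu dt \<in> borel_measurable lborel"
    unfolding lag_density_def by measurable
  have dpos: "AE t in lborel. 0 \<le> lag_density mu dt t"
  proof -
    have "exp (- mu * dt) < 1" using mu dt by simp
    then show ?thesis unfolding lag_density_def using mu
      by (auto intro!: AE_I2 simp: indicator_def)
  qed
  have "lag_expect mu dt g = integral\<^sup>L (lag_distr mu dt) (\<lambda>t. indicator S t *\<^sub>R g t)"
    unfolding lag_expect_def set_lebesgue_integral_def S_def by simp
  also have "\<dots> = integral\<^sup>L lborel (\<lambda>t. lag_density mu dt t *\<^sub>R (indicator S t *\<^sub>R g t))"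
    unfolding lag_distr_def by (rule integral_density[OF meas dmeas dpos])
  also have "\<dots> = integral\<^sup>L lborel (\<lambda>t. indicator S t *\<^sub>R ((c * exp (- mu * t)) *\<^sub>R g t))"
    by (rule Bochner_Integration.integral_cong)
       (auto simp: lag_density_def c_def S_def indicator_def)
  also have "\<dots> = (LINT t:S|lborel. (c * exp (- mu * t)) *\<^sub>R g t)"
    unfolding set_lebesgue_integral_def by simp
  also have "\<dots> = integral S (\<lambda>t. (c * exp (- mu * t)) *\<^sub>R g t)"
  proof (rule set_borel_integral_eq_integral)
    have "continuous_on {0..dt} (\<lambda>t. (c * exp (- mu * t)) *\<^sub>R g t)"
      by (intro continuous_intros cont)
    from borel_integrable_atLeastAtMost'[OF this]
    show "set_integrable lborel S (\<lambda>t. (c * exp (- mu * t)) *\<^sub>R g t)"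
      by (rule set_integrable_subset) (auto simp: S_def)
  qed
  also have "\<dots> = integral {0..dt} (\<lambda>t. (c * exp (- mu * t)) *\<^sub>R g t)"
    by (rule integral_spike_set) (auto simp: S_def intro: negligible_subset[of "{dt}"])
  also have "\<dots> = c *\<^sub>R I"
    using integral_unique[OF has_integral_cmul[OF I, of c]] by simp
  finally show ?thesis unfolding c_def .
qed


lemma outer_scaleR_left: "outer (r *\<^sub>R x) y = r *\<^sub>R outer x y"
  and outer_scaleR_right: "outer x (r *\<^sub>R y) = r *\<^sub>R outer x y"
  by (auto simp: outer_def vec_eq_iff)

lemma bounded_linear_outer_left: "bounded_linear (\<lambda>x. outer x a)"
  unfolding linear_conv_bounded_linear[symmetric]
  by (rule linearI) (auto simp: outer_def vec_eq_iff algebra_simps)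

lemma bounded_linear_outer_right: "bounded_linear (\<lambda>x. outer a x)"
  unfolding linear_conv_bounded_linear[symmetric]
  by (rule linearI) (auto simp: outer_def vec_eq_iff algebra_simps)

lemma continuous_on_outer:
  "continuous_on S u \<Longrightarrow> continuous_on S v \<Longrightarrow> continuous_on S (\<lambda>t. outer (u t) (v t))"
  unfolding outer_def by (intro continuous_intros)

theorem proposition8:
  fixes f :: "real^'n \<Rightarrow> real^'n"
    and Fx :: "real^'n \<Rightarrow> real^'n^'n"
    and L :: "real^'n \<Rightarrow> real^'b^'n"
    and Q :: "real^'b^'b"
    and xa :: "real^'n" and Pa :: "real^'n^'n"
    and mu dt :: real
    and m xbar :: "real \<Rightarrow> real^'n"
    and P Sigma :: "real \<Rightarrow> real^'n^'n"
  assumes f_deriv: "\<And>x. (f has_derivative (\<lambda>h. Fx x *v h)) (at x)"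
    and Q_sym: "transpose Q = Q" and Q_psd: "\<And>v. 0 \<le> v \<bullet> (Q *v v)"
    and Pa_sym: "transpose Pa = Pa" and Pa_psd: "\<And>v. 0 \<le> v \<bullet> (Pa *v v)"
    and mu_pos: "mu > 0" and dt_pos: "dt > 0"
    and m_ode: "\<And>t. t \<in> {0..dt} \<Longrightarrow> (m has_vector_derivative f (m t)) (at t within {0..dt})"
    and P_ode: "\<And>t. t \<in> {0..dt} \<Longrightarrow> (P has_vector_derivative
        (P t ** transpose (Fx (m t)) + Fx (m t) ** P t + L (m t) ** Q ** transpose (L (m t))))
        (at t within {0..dt})"
    and xbar_ode: "\<And>t. t \<in> {0..dt} \<Longrightarrow> (xbar has_vector_derivative exp (- mu * t) *\<^sub>R m t)
        (at t within {0..dt})"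
    and Sigma_ode: "\<And>t. t \<in> {0..dt} \<Longrightarrow> (Sigma has_vector_derivative
        exp (- mu * t) *\<^sub>R (P t + outer (m t) (m t))) (at t within {0..dt})"
    and m_init: "m 0 = xa" and P_init: "P 0 = Pa"
    and xbar_init: "xbar 0 = 0" and Sigma_init: "Sigma 0 = 0"
  shows "lag_expect mu dt m = (mu / (1 - exp (- mu * dt))) *\<^sub>R xbar dt
    \<and> lag_cov mu dt m + lag_expect mu dt P
        = (mu / (1 - exp (- mu * dt))) *\<^sub>R Sigma dt - outer (lag_expect mu dt m) (lag_expect mu dt m)"
proof -
  define c where "c = mu / (1 - exp (- mu * dt))"
  define K where "K = (1 - exp (- mu * dt)) / mu"
  have ne: "exp (- mu * dt) < 1" using mu_pos dt_pos by simp
  have cK: "c * K = 1" unfolding c_def K_def using ne mu_pos dt_pos by (simp add: field_simps)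
  have contm: "continuous_on {0..dt} m"
    by (auto simp: continuous_on_eq_continuous_within intro: has_vector_derivative_continuous m_ode)
  have contP: "continuous_on {0..dt} P"
    by (auto simp: continuous_on_eq_continuous_within intro: has_vector_derivative_continuous P_ode)
  have hx: "((\<lambda>t. exp (- mu * t) *\<^sub>R m t) has_integral xbar dt) {0..dt}"
    using fundamental_theorem_of_calculus[of 0 dt xbar, OF _ xbar_ode] dt_pos xbar_init by simp
  have hS: "((\<lambda>t. exp (- mu * t) *\<^sub>R (P t + outer (m t) (m t))) has_integral Sigma dt) {0..dt}"
    using fundamental_theorem_of_calculus[of 0 dt Sigma, OF _ Sigma_ode] dt_pos Sigma_init by simp
  have he: "((\<lambda>t. exp (- mu * t)) has_integral K) {0..dt}"
  proof -
    have "\<And>t. ((\<lambda>t. - exp (- mu * t) / mu) has_vector_derivative exp (- mu * t)) (at t within {0..dt})"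
      unfolding has_real_derivative_iff_has_vector_derivative[symmetric]
      using mu_pos by (auto intro!: derivative_eq_intros simp: field_simps)
    from fundamental_theorem_of_calculus[of 0 dt _ "\<lambda>t. exp (- mu * t)", OF _ this]
    show ?thesis using dt_pos mu_pos unfolding K_def by (simp add: field_simps)
  qed
  define IP where "IP = integral {0..dt} (\<lambda>t. exp (- mu * t) *\<^sub>R P t)"
  have hP: "((\<lambda>t. exp (- mu * t) *\<^sub>R P t) has_integral IP) {0..dt}"
    unfolding IP_def
    by (intro integrable_integral integrable_continuous_interval continuous_intros contP)
  define IMM where "IMM = Sigma dt - IP"
  have hMM: "((\<lambda>t. exp (- mu * t) *\<^sub>R outer (m t) (m t)) has_integral IMM) {0..dt}"
    using has_integral_diff[OF hS hP] unfolding IMM_def by (simp add: algebra_simps)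
  define a where "a = lag_expect mu dt m"
  have a: "a = c *\<^sub>R xbar dt"
    unfolding a_def c_def by (rule lagE[OF mu_pos dt_pos contm hx])
  have EP: "lag_expect mu dt P = c *\<^sub>R IP"
    unfolding c_def by (rule lagE[OF mu_pos dt_pos contP hP])
  define J where "J = IMM - outer (xbar dt) a - outer a (xbar dt) + K *\<^sub>R outer a a"
  have h1: "((\<lambda>t. outer (exp (- mu * t) *\<^sub>R m t) a) has_integral outer (xbar dt) a) {0..dt}"
    using has_integral_linear[OF hx bounded_linear_outer_left[of a]] by (simp add: comp_def)
  have h2: "((\<lambda>t. outer a (exp (- mu * t) *\<^sub>R m t)) has_integral outer a (xbar dt)) {0..dt}"
    using has_integral_linear[OF hx bounded_linear_outer_right[of a]] by (simp add: comp_def)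
  have h3: "((\<lambda>t. exp (- mu * t) *\<^sub>R outer a a) has_integral K *\<^sub>R outer a a) {0..dt}"
    using has_integral_scaleR_left[OF he] .
  have pw: "\<And>t. exp (- mu * t) *\<^sub>R outer (m t - a) (m t - a) =
      exp (- mu * t) *\<^sub>R outer (m t) (m t) - outer (exp (- mu * t) *\<^sub>R m t) a
      - outer a (exp (- mu * t) *\<^sub>R m t) + exp (- mu * t) *\<^sub>R outer a a"
    by (auto simp: outer_def vec_eq_iff algebra_simps)
  have hJ: "((\<lambda>t. exp (- mu * t) *\<^sub>R outer (m t - a) (m t - a)) has_integral J) {0..dt}"
    unfolding pw J_def by (intro has_integral_add has_integral_diff hMM h1 h2 h3)
  have contC: "continuous_on {0..dt} (\<lambda>t. outer (m t - a) (m t - a))"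
    by (intro continuous_on_outer continuous_intros contm)
  have cov: "lag_cov mu dt m = c *\<^sub>R J"
    unfolding lag_cov_def a_def[symmetric] c_def by (rule lagE[OF mu_pos dt_pos contC hJ])
  have "c *\<^sub>R J + c *\<^sub>R IP = c *\<^sub>R Sigma dt - outer a a"
  proof -
    have "c *\<^sub>R J = c *\<^sub>R IMM - outer a a - outer a a + (c * K) *\<^sub>R outer a a"
      unfolding J_def a by (simp add: algebra_simps outer_scaleR_left outer_scaleR_right)
    then show ?thesis using cK unfolding IMM_def by (simp add: algebra_simps)
  qed
  then show ?thesis using a cov EP unfolding a_def c_def by simp
qed

end
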